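(* Let $n\ge 1$ and let $G$ be a random threshold graph on $n$ vertices. Then for every integer $k\ge 0$, $$P\big(h(\mathrm{seq}(G))=k\big)=\left(\tfrac12\right)^{n-1}\binom{n-1}{\left\lfloor \frac{n+k}{2}\right\rfloor}.$$
   Context: A threshold graph on $n\ge1$ vertices is built from a base vertex $v_0$ by successively adding $v_1,\dots,v_{n-1}$, each either isolated (adjacent to no earlier vertex) or dominating (adjacent to all earlier vertices); its creation sequence $\mathrm{seq}(G)=s_1\cdots s_{n-1}$ has $s_i=1$ if $v_i$ is dominating and $s_i=0$ otherwise, and each unlabeled threshold graph on $n$ vertices corresponds to exactly one binary string of length $n-1$. A random threshold graph on $n$ vertices is one whose creation sequence is uniformly distributed over all $2^{n-1}$ binary strings of length $n-1$ (equivalently, the graph obtained from $n$ independent uniform weights on $[0,1]$, joining two vertices iff their weights sum to more than $1$). For a binary string $s=s_1\cdots s_m$ and $0\le k\le m$, the $k$-th tail is $s_{m-k+1}\cdots s_m$ (the empty string for $k=0$); $z_k(s)$ and $u_k(s)$ denote the numbers of zeros and ones in the $k$-th tail. Define $h(s)=\max_{0\le k\le m}\{z_k(s)-u_k(s)\}$. *)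

theory Defs
  imports "HOL-Probability.Probability"
begin

text \<open>Binary strings are bool lists; True = 1 (dominating), False = 0 (isolated).\<close>

definition tail :: "nat \<Rightarrow> bool list \<Rightarrow> bool list" where
  "tail k s = drop (length s - k) s"

definition zeros :: "nat \<Rightarrow> bool list \<Rightarrow> nat" where
  "zeros k s = length (filter (\<lambda>b. \<not> b) (tail k s))"

definition ones :: "nat \<Rightarrow> bool list \<Rightarrow> nat" where
  "ones k s = length (filter (\<lambda>b. b) (tail k s))"

definition h :: "bool list \<Rightarrow> int" where
  "h s = Max {int (zeros k s) - int (ones k s) | k. k \<le> length s}"

text \<open>Creation sequences of threshold graphs on n vertices: all binary strings of length n-1.
  A random threshold graph has uniformly distributed creation sequence.\<close>

definition creation_seqs :: "nat \<Rightarrow> bool list set" where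
  "creation_seqs n = {s. length s = n - 1}"

definition random_creation_seq :: "nat \<Rightarrow> bool list pmf" where
  "random_creation_seq n = pmf_of_set (creation_seqs n)"

end

theory Submission
  imports Defs
begin

definition dd :: "bool \<Rightarrow> int" where "dd c = (if c then -1 else 1)"

definition vl :: "bool list \<Rightarrow> int" where "vl s = sum_list (map dd s)"

fun g :: "bool list \<Rightarrow> int" where
  "g [] = 0"
| "g (c # s) = max (g s) (vl (c # s))"

lemma vl_count: "vl s = int (length (filter (\<lambda>b. \<not> b) s)) - int (length (filter (\<lambda>b. b) s))"
  by (induction s) (auto simp: vl_def dd_def)

lemma g_nonneg: "g s \<ge> 0"
  by (induction s) auto

lemma g_snoc: "g (s @ [c]) = max 0 (g s + dd c)"
  by (induction s) (auto simp: vl_def)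

lemma tail_cons: "k \<le> length s \<Longrightarrow> tail k (c # s) = tail k s"
  by (simp add: tail_def Suc_diff_le)

lemma tail_full: "tail (Suc (length s)) (c # s) = c # s"
  by (simp add: tail_def)

lemma h_g: "h s = g s"
proof -
  have "Max {vl (tail k s) | k. k \<le> length s} = g s"
  proof (induction s)
    case Nil
    then show ?case by (simp add: tail_def vl_def)
  next
    case (Cons c s)
    have eq: "{vl (tail k (c # s)) | k. k \<le> length (c # s)}
        = insert (vl (c # s)) {vl (tail k s) | k. k \<le> length s}"
    proof (rule set_eqI, rule iffI)
      fix x assume "x \<in> {vl (tail k (c # s)) | k. k \<le> length (c # s)}"
      then obtain k where k: "k \<le> Suc (length s)" "x = vl (tail k (c # s))" by auto
      show "x \<in> insert (vl (c # s)) {vl (tail k s) | k. k \<le> length s}"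
      proof (cases "k = Suc (length s)")
        case True then show ?thesis using k tail_full by auto
      next
        case False then show ?thesis using k tail_cons[of k s c] by auto
      qed
    next
      fix x assume "x \<in> insert (vl (c # s)) {vl (tail k s) | k. k \<le> length s}"
      then show "x \<in> {vl (tail k (c # s)) | k. k \<le> length (c # s)}"
      proof
        assume "x = vl (c # s)"
        then show ?thesis using tail_full[of s c] by (auto intro!: exI[of _ "Suc (length s)"])
      next
        assume "x \<in> {vl (tail k s) | k. k \<le> length s}"
        then obtain k where "k \<le> length s" "x = vl (tail k s)" by auto
        then show ?thesis using tail_cons[of k s c] by (auto intro!: exI[of _ k])
      qed
    qed
    have fin: "finite {vl (tail k s) | k. k \<le> length s}" by simp
    have ne: "{vl (tail k s) | k. k \<le> length s} \<noteq> {}" by auto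
    show ?case unfolding eq using Max_insert[OF fin ne] Cons by (simp add: max.commute)
  qed
  moreover have "{int (zeros k s) - int (ones k s) | k. k \<le> length s}
      = {vl (tail k s) | k. k \<le> length s}"
    by (simp add: zeros_def ones_def vl_count)
  ultimately show ?thesis by (simp add: h_def)
qed

lemma fin_len: "finite {s :: bool list. length s = m \<and> P s}"
proof -
  have "{s :: bool list. length s = m \<and> P s} \<subseteq> {s. set s \<subseteq> UNIV \<and> length s = m}" by auto
  moreover have "finite {s :: bool list. set s \<subseteq> UNIV \<and> length s = m}"
    by (rule finite_lists_length_eq) simp
  ultimately show ?thesis by (rule finite_subset)
qed

lemma card_split: "card {s :: bool list. length s = Suc m \<and> P s}
   = card {s. length s = m \<and> P (s @ [False])} + card {s. length s = m \<and> P (s @ [True])}"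
proof -
  let ?A = "{s. length s = m \<and> P (s @ [False])}"
  let ?B = "{s. length s = m \<and> P (s @ [True])}"
  have eq: "{s :: bool list. length s = Suc m \<and> P s} = (\<lambda>s. s @ [False]) ` ?A \<union> (\<lambda>s. s @ [True]) ` ?B"
  proof (rule set_eqI, rule iffI)
    fix x assume x: "x \<in> {s :: bool list. length s = Suc m \<and> P s}"
    then have "x \<noteq> []" by auto
    then obtain y c where xy: "x = y @ [c]" by (metis rev_exhaust)
    show "x \<in> (\<lambda>s. s @ [False]) ` ?A \<union> (\<lambda>s. s @ [True]) ` ?B"
      using x xy by (cases c) auto
  qed auto
  have d: "(\<lambda>s. s @ [False]) ` ?A \<inter> (\<lambda>s. s @ [True]) ` ?B = {}" by auto
  have "card {s :: bool list. length s = Suc m \<and> P s} = card ((\<lambda>s. s @ [False]) ` ?A) + card ((\<lambda>s. s @ [True]) ` ?B)"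
    unfolding eq by (rule card_Un_disjoint) (use d fin_len in auto)
  also have "\<dots> = card ?A + card ?B"
    by (simp add: card_image inj_on_def)
  finally show ?thesis .
qed

definition N :: "nat \<Rightarrow> nat \<Rightarrow> nat" where
  "N m k = card {s :: bool list. length s = m \<and> g s = int k}"

lemma N_rec0: "N (Suc m) 0 = N m 0 + N m 1"
proof -
  have nz: "g (s @ [False]) \<noteq> 0" for s using g_nonneg[of s] by (simp add: g_snoc dd_def)
  have tz: "g (s @ [True]) = 0 \<longleftrightarrow> g s = 0 \<or> g s = 1" for s using g_nonneg[of s] by (auto simp: g_snoc dd_def)
  have "N (Suc m) 0 = card {s. length s = m \<and> g (s @ [False]) = 0} + card {s. length s = m \<and> g (s @ [True]) = 0}"
    unfolding N_def using card_split[of m "\<lambda>s. g s = int 0"] by simp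
  also have "{s. length s = m \<and> g (s @ [False]) = 0} = {}"
    using nz by auto
  also have "{s. length s = m \<and> g (s @ [True]) = 0} =
     {s. length s = m \<and> g s = int 0} \<union> {s. length s = m \<and> g s = int 1}"
    using tz by auto
  also have "card \<dots> = N m 0 + N m 1" unfolding N_def
    by (rule card_Un_disjoint) (auto intro: fin_len)
  finally show ?thesis by simp
qed

lemma N_recS: "N (Suc m) (Suc k) = N m k + N m (Suc (Suc k))"
proof -
  have "N (Suc m) (Suc k) = card {s. length s = m \<and> g (s @ [False]) = int (Suc k)} + card {s. length s = m \<and> g (s @ [True]) = int (Suc k)}"
    unfolding N_def using card_split[of m "\<lambda>s. g s = int (Suc k)"] by simp
  also have "{s. length s = m \<and> g (s @ [False]) = int (Suc k)} = {s. length s = m \<and> g s = int k}"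
    using g_nonneg by (auto simp: g_snoc dd_def)
  also have "{s. length s = m \<and> g (s @ [True]) = int (Suc k)} = {s. length s = m \<and> g s = int (Suc (Suc k))}"
    using g_nonneg by (auto simp: g_snoc dd_def)
  finally show ?thesis by (simp add: N_def)
qed

lemma N_formula: "N m k = m choose ((m + k + 1) div 2)"
proof (induction m arbitrary: k)
  case 0
  have "{s::bool list. length s = 0 \<and> g s = int k} = (if k = 0 then {[]} else {})" by auto
  then have "N 0 k = (if k = 0 then 1 else 0)"
    by (simp add: N_def)
  then show ?case by (cases k) auto
next
  case (Suc m)
  show ?case
  proof (cases k)
    case 0
    have "N (Suc m) k = (m choose ((m + 1) div 2)) + (m choose ((m + 2) div 2))"
      using 0 N_rec0 Suc by (simp add: numeral_2_eq_2)
    also have "\<dots> = Suc m choose ((Suc m + 0 + 1) div 2)"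
    proof (cases "even m")
      case True
      then obtain a where a: "m = 2 * a" by auto
      have "(m + 1) div 2 = a" "(m + 2) div 2 = Suc a" "(Suc m + 0 + 1) div 2 = Suc a" using a by auto
      then show ?thesis by simp
    next
      case False
      then obtain a where a: "m = 2 * a + 1" using oddE by blast
      have e: "(m + 1) div 2 = Suc a" "(m + 2) div 2 = Suc a" "(Suc m + 0 + 1) div 2 = Suc a" using a by auto
      have "m choose a = m choose Suc a"
        using binomial_symmetric[of a m] a by (simp add: numeral_2_eq_2)
      then show ?thesis unfolding e by simp
    qed
    finally show ?thesis using 0 by simp
  next
    case (Suc j)
    have e1: "(m + j + 1) div 2 = (m + j + 3) div 2 - 1" and e2: "(m + j + 3) div 2 > 0" by auto
    have "N (Suc m) k = (m choose ((m + j + 1) div 2)) + (m choose ((m + j + 3) div 2))"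
      using Suc N_recS \<open>\<And>k. N m k = _\<close> by (simp add: numeral_3_eq_3)
    also have "\<dots> = Suc m choose ((m + j + 3) div 2)"
      using e2 unfolding e1 by (cases "(m + j + 3) div 2") auto
    also have "(m + j + 3) div 2 = (Suc m + k + 1) div 2" using Suc by simp
    finally show ?thesis .
  qed
qed

theorem mainTheorem2:
  fixes n k :: nat
  assumes "n \<ge> 1"
  shows "measure_pmf.prob (random_creation_seq n) {s. h s = int k}
           = (1/2) ^ (n - 1) * real ((n - 1) choose ((n + k) div 2))"
proof -
  let ?m = "n - 1"
  have cs: "creation_seqs n = {s :: bool list. length s = ?m \<and> True}" by (simp add: creation_seqs_def)
  have fin: "finite (creation_seqs n)" unfolding cs by (rule fin_len)
  have ne: "creation_seqs n \<noteq> {}" unfolding creation_seqs_def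
    using length_replicate[of "n - 1" False] by blast
  have card: "card (creation_seqs n) = 2 ^ ?m"
  proof -
    have "creation_seqs n = {s :: bool list. set s \<subseteq> UNIV \<and> length s = ?m}" by (auto simp: creation_seqs_def)
    moreover have "card {s :: bool list. set s \<subseteq> UNIV \<and> length s = ?m} = 2 ^ ?m"
      by (subst card_lists_length_eq) auto
    ultimately show ?thesis by simp
  qed
  have int: "creation_seqs n \<inter> {s. h s = int k} = {s. length s = ?m \<and> g s = int k}"
    by (auto simp: creation_seqs_def h_g)
  have "measure_pmf.prob (random_creation_seq n) {s. h s = int k}
      = real (N ?m k) / 2 ^ ?m"
    unfolding random_creation_seq_def using fin ne
    by (simp add: measure_pmf_of_set int card N_def)
  also have "N ?m k = ?m choose ((n + k) div 2)"
    using N_formula assms by simp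
  finally show ?thesis by (simp add: field_simps power_one_over)
qed

end
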